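(* Let $k, r, a, b, m, n$ be integers satisfying $$k\geq 1,\quad 0\leq a\leq m,\quad \max\{0,ka-r\}<b\leq n,\quad n>km-r.$$ Let $\mathcal{L}_{k,r}(a,b;m,n)$ be the set of lattice paths from $(a,b)$ to $(m,n)$ with unit steps $(1,0)$ and $(0,1)$ that stay strictly above the line $y=kx-r$. Then $$|\mathcal{L}_{k,r}(a,b;m,n)|=\sum_{i=0}^{\lfloor\frac{b+r-1-ka}{k+1}\rfloor}(-1)^i\,\frac{n+r-km}{m+n+r-(k+1)(a+i)}\binom{m+n+r-(k+1)(a+i)}{m-a-i}\binom{b+r-1-k(a+i)}{i}.$$
   Context: A path stays strictly above the line $y=kx-r$ if every lattice point $(x,y)$ on it satisfies $y> kx-r$. $\lfloor x\rfloor$ is the floor function. Binomial coefficients $\binom{N}{j}$ with $N\ge0$ equal $0$ when $j<0$ or $j>N$. *)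

theory Defs
  imports Complex_Main
begin

text \<open>A lattice path with unit steps is encoded by its list of steps:
  True = east step (1,0), False = north step (0,1).\<close>

fun step_pt :: "bool \<Rightarrow> int \<times> int \<Rightarrow> int \<times> int" where
  "step_pt s (x, y) = (if s then (x + 1, y) else (x, y + 1))"

fun path_points :: "int \<times> int \<Rightarrow> bool list \<Rightarrow> (int \<times> int) list" where
  "path_points p [] = [p]"
| "path_points p (s # ss) = p # path_points (step_pt s p) ss"

definition path_end :: "int \<times> int \<Rightarrow> bool list \<Rightarrow> int \<times> int" where
  "path_end p ss = last (path_points p ss)"

definition lpaths :: "int \<Rightarrow> int \<Rightarrow> int \<Rightarrow> int \<Rightarrow> int \<Rightarrow> int \<Rightarrow> bool list set" where
  "lpaths k r a b m n =
     {ss. path_end (a, b) ss = (m, n) \<and>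
          (\<forall>(x, y) \<in> set (path_points (a, b) ss). y > k * x - r)}"

text \<open>Integer binomial coefficient with the convention binom N j = 0 for j < 0 or j > N (N \<ge> 0).\<close>
definition binom :: "int \<Rightarrow> int \<Rightarrow> int" where
  "binom N j = (if 0 \<le> j \<and> j \<le> N then int (nat N choose nat j) else 0)"

end

theory Submission imports Defs begin

lemma pp_ne: "path_points p ss \<noteq> []" by (cases ss) auto

lemma path_end_Nil[simp]: "path_end p [] = p" by (simp add: path_end_def)

lemma path_end_Cons[simp]: "path_end p (s#ss) = path_end (step_pt s p) ss"
  by (simp add: path_end_def pp_ne)

lemma path_end_coords: "path_end (x,y) ss = (x + int (length (filter id ss)), y + int (length (filter Not ss)))"
proof (induction ss arbitrary: x y)
  case Nil then show ?case by simp
next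
  case (Cons s ss) then show ?case by (cases s) auto
qed

lemma start_in: "p \<in> set (path_points p ss)" by (cases ss) auto

lemma end_in: "path_end p ss \<in> set (path_points p ss)"
  by (simp add: path_end_def pp_ne)

lemma pp_snoc: "path_points p (ss@[s]) = path_points p ss @ [step_pt s (path_end p ss)]"
  by (induction ss arbitrary: p) auto

lemma path_end_snoc: "path_end p (ss@[s]) = step_pt s (path_end p ss)"
  by (simp add: path_end_def pp_snoc)

lemma lpaths_len: assumes "ss \<in> lpaths k r a b m n"
  shows "int (length ss) = m - a + n - b \<and> a \<le> m \<and> b \<le> n"
proof -
  have "path_end (a,b) ss = (m,n)" using assms by (simp add: lpaths_def)
  then have "m = a + int (length (filter id ss))" "n = b + int (length (filter Not ss))"
    by (auto simp: path_end_coords)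
  moreover have "length (filter id ss) + length (filter Not ss) = length ss"
    using sum_length_filter_compl[of id ss] by (simp add: comp_def)
  ultimately show ?thesis by linarith
qed

lemma finite_lpaths: "finite (lpaths k r a b m n)"
proof -
  have "lpaths k r a b m n \<subseteq> {xs. set xs \<subseteq> UNIV \<and> length xs = nat (m - a + n - b)}"
    using lpaths_len by fastforce
  moreover have "finite {xs::bool list. set xs \<subseteq> UNIV \<and> length xs = nat (m - a + n - b)}"
    by (rule finite_lists_length_eq) simp
  ultimately show ?thesis by (rule finite_subset)
qed

lemma lpaths_empty_lt: "m < a \<or> n < b \<Longrightarrow> lpaths k r a b m n = {}"
  using lpaths_len by fastforce

lemma lpaths_empty_start: "\<not> b > k*a - r \<Longrightarrow> lpaths k r a b m n = {}"
  unfolding lpaths_def using start_in by fastforce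

lemma lpaths_empty_end: "\<not> n > k*m - r \<Longrightarrow> lpaths k r a b m n = {}"
  unfolding lpaths_def using end_in by fastforce

lemma lpaths_refl: "b > k*a - r \<Longrightarrow> lpaths k r a b a b = {[]}"
proof
  assume "b > k*a - r"
  then show "{[]} \<subseteq> lpaths k r a b a b" by (simp add: lpaths_def)
  show "lpaths k r a b a b \<subseteq> {[]}" using lpaths_len by fastforce
qed

lemma first_step_eq:
  assumes "b > k*a - r" "(a,b) \<noteq> (m,n)"
  shows "lpaths k r a b m n = Cons True ` lpaths k r (a+1) b m n \<union> Cons False ` lpaths k r a (b+1) m n"
proof (intro equalityI subsetI)
  fix ss assume ss: "ss \<in> lpaths k r a b m n"
  then have "ss \<noteq> []" using assms(2) by (auto simp: lpaths_def)
  then obtain s t where st: "ss = s # t" by (cases ss) auto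
  show "ss \<in> Cons True ` lpaths k r (a+1) b m n \<union> Cons False ` lpaths k r a (b+1) m n"
  proof (cases s)
    case True
    then have "t \<in> lpaths k r (a+1) b m n" using ss st by (auto simp: lpaths_def)
    then show ?thesis using st True by blast
  next
    case False
    then have "t \<in> lpaths k r a (b+1) m n" using ss st by (auto simp: lpaths_def)
    then show ?thesis using st False by blast
  qed
next
  fix ss assume "ss \<in> Cons True ` lpaths k r (a+1) b m n \<union> Cons False ` lpaths k r a (b+1) m n"
  then show "ss \<in> lpaths k r a b m n" using assms(1) by (auto simp: lpaths_def)
qed

lemma first_step:
  assumes "b > k*a - r" "(a,b) \<noteq> (m,n)"
  shows "card (lpaths k r a b m n) = card (lpaths k r (a+1) b m n) + card (lpaths k r a (b+1) m n)"
  unfolding first_step_eq[OF assms]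
  by (subst card_Un_disjoint) (auto simp: finite_lpaths card_image)

lemma last_step_eq:
  assumes "n > k*m - r" "(a,b) \<noteq> (m,n)"
  shows "lpaths k r a b m n = (\<lambda>t. t@[True]) ` lpaths k r a b (m-1) n \<union> (\<lambda>t. t@[False]) ` lpaths k r a b m (n-1)"
proof (intro equalityI subsetI)
  fix ss assume ss: "ss \<in> lpaths k r a b m n"
  then have "ss \<noteq> []" using assms(2) by (auto simp: lpaths_def)
  then obtain s t where st: "ss = t @ [s]" by (cases ss rule: rev_exhaust) auto
  obtain x y where xy: "path_end (a,b) t = (x,y)" by fastforce
  have e: "step_pt s (x,y) = (m,n)" using ss st xy by (simp add: lpaths_def path_end_snoc)
  have pts: "\<forall>(x, y) \<in> set (path_points (a, b) t). y > k * x - r"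
    using ss st by (simp add: lpaths_def pp_snoc)
  show "ss \<in> (\<lambda>t. t@[True]) ` lpaths k r a b (m-1) n \<union> (\<lambda>t. t@[False]) ` lpaths k r a b m (n-1)"
  proof (cases s)
    case True
    then have "t \<in> lpaths k r a b (m-1) n" using e xy pts by (auto simp: lpaths_def split: if_splits)
    then show ?thesis using st True by blast
  next
    case False
    then have "t \<in> lpaths k r a b m (n-1)" using e xy pts by (auto simp: lpaths_def split: if_splits)
    then show ?thesis using st False by blast
  qed
next
  fix ss assume "ss \<in> (\<lambda>t. t@[True]) ` lpaths k r a b (m-1) n \<union> (\<lambda>t. t@[False]) ` lpaths k r a b m (n-1)"
  then show "ss \<in> lpaths k r a b m n" using assms(1)
    by (auto simp: lpaths_def pp_snoc path_end_snoc)
qed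

lemma last_step:
  assumes "n > k*m - r" "(a,b) \<noteq> (m,n)"
  shows "card (lpaths k r a b m n) = card (lpaths k r a b (m-1) n) + card (lpaths k r a b m (n-1))"
  unfolding last_step_eq[OF assms]
  by (subst card_Un_disjoint) (auto simp: finite_lpaths card_image inj_on_def)


lemma binom_neg[simp]: "j < 0 \<Longrightarrow> binom N j = 0" by (simp add: binom_def)
lemma binom_gt: "N < j \<Longrightarrow> binom N j = 0" by (simp add: binom_def)
lemma binom_0: "0 \<le> N \<Longrightarrow> binom N 0 = 1" by (simp add: binom_def)

lemma binom_alt: "0 \<le> N \<Longrightarrow> 0 \<le> j \<Longrightarrow> binom N j = int (nat N choose nat j)"
  by (auto simp: binom_def binomial_eq_0)

lemma binom_pascal: assumes "N \<ge> 1" shows "binom N j = binom (N-1) j + binom (N-1) (j-1)"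
proof (cases "j \<le> 0")
  case True
  then show ?thesis using assms by (cases "j = 0") (auto simp: binom_0)
next
  case False
  then have j: "nat j = Suc (nat (j-1))" by simp
  have N: "nat N = Suc (nat (N-1))" using assms by simp
  show ?thesis using False assms
    by (simp add: binom_alt j N del: binomial_Suc_Suc)
       (metis Suc_eq_plus1 binomial_Suc_Suc j nat_diff_distrib' nat_one_as_int zero_le_one add.commute of_nat_add)
qed


lemma binom_absorb1: assumes "L \<ge> 1" shows "L * binom (L-1) u = (L - u) * binom L u"
proof (cases "u < 0 \<or> u > L")
  case True then show ?thesis by (auto simp: binom_gt)
next
  case False
  then have u: "0 \<le> u" "u \<le> L" by auto
  have "(nat L - nat u) * (nat L choose nat u) = nat L * ((nat L - 1) choose nat u)"
    by (rule binomial_absorb_comp)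
  then have "int ((nat L - nat u) * (nat L choose nat u)) = int (nat L * ((nat L - 1) choose nat u))"
    by simp
  moreover have "nat L - 1 = nat (L - 1)" using assms by simp
  ultimately show ?thesis using u assms by (simp add: binom_alt of_nat_diff nat_diff_distrib)
qed

lemma binom_absorb2: assumes "L \<ge> 1" shows "L * binom (L-1) (u-1) = u * binom L u"
proof (cases "u \<le> 0 \<or> u > L")
  case True then show ?thesis by (cases "u < 0") (auto simp: binom_gt)
next
  case False
  then have u: "1 \<le> u" "u \<le> L" by auto
  have "nat u * (nat L choose nat u) = nat L * ((nat L - 1) choose (nat u - 1))"
    by (rule times_binomial_minus1_eq) (use u in auto)
  then have "int (nat u * (nat L choose nat u)) = int (nat L * ((nat L - 1) choose (nat u - 1)))"
    by simp
  moreover have "nat L - 1 = nat (L - 1)" "nat u - 1 = nat (u - 1)" using assms u by auto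
  ultimately show ?thesis using u assms by (simp add: binom_alt)
qed

definition Q :: "int \<Rightarrow> int \<Rightarrow> int \<Rightarrow> int" where
  "Q k u w = binom (u+w-1) u - k * binom (u+w-1) (u-1)"

lemma Q_pascal: "u + w \<ge> 2 \<Longrightarrow> Q k u w = Q k (u-1) w + Q k u (w-1)"
  unfolding Q_def using binom_pascal[of "u+w-1" u] binom_pascal[of "u+w-1" "u-1"]
  by (simp add: algebra_simps)

lemma Q_left: "Q k (-1) w = 0" by (simp add: Q_def)

lemma Q_line: assumes "u \<ge> 1" "k \<ge> 1" shows "Q k u (k*u) = 0"
proof -
  let ?L = "u + k*u"
  have L: "?L \<ge> 1" using assms by (smt (verit) mult_nonneg_nonneg)
  have "?L * Q k u (k*u) = ?L * binom (?L-1) u - k * (?L * binom (?L-1) (u-1))"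
    by (simp add: Q_def algebra_simps)
  also have "\<dots> = 0" using binom_absorb1[OF L, of u] binom_absorb2[OF L, of u]
    by (simp add: algebra_simps)
  finally show ?thesis using L by simp
qed

lemma Q_real: assumes "u \<ge> 0" "w \<ge> 1"
  shows "real_of_int (Q k u w) = real_of_int (w - k*u) / real_of_int (u+w) * real_of_int (binom (u+w) u)"
proof -
  let ?L = "u + w"
  have L: "?L \<ge> 1" using assms by simp
  have "?L * Q k u w = ?L * binom (?L-1) u - k * (?L * binom (?L-1) (u-1))"
    by (simp add: Q_def algebra_simps)
  also have "\<dots> = (w - k*u) * binom ?L u" using binom_absorb1[OF L, of u] binom_absorb2[OF L, of u]
    by (simp add: algebra_simps)
  finally have "real_of_int (?L * Q k u w) = real_of_int ((w - k*u) * binom ?L u)" by simp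
  then show ?thesis using L by (simp add: field_simps)
qed


lemma ballot:
  assumes k: "k \<ge> 1"
  shows "Y > k*X - r \<Longrightarrow> c \<le> X \<Longrightarrow>
    int (card (lpaths k r c (k*c-r+1) X Y)) = Q k (X-c) (Y-(k*c-r))"
proof (induction "nat (X - c + Y - (k*c-r+1))" arbitrary: X Y rule: less_induct)
  case less
  have kc: "k*c \<le> k*X" using k less.prems(2) by (simp add: mult_left_mono)
  show ?case
  proof (cases "(X,Y) = (c, k*c-r+1)")
    case True
    then show ?thesis using lpaths_refl[of k c r "k*c-r+1"] by (simp add: Q_def binom_0)
  next
    case False
    have rec: "card (lpaths k r c (k*c-r+1) X Y) =
        card (lpaths k r c (k*c-r+1) (X-1) Y) + card (lpaths k r c (k*c-r+1) X (Y-1))"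
      using last_step[of k X r Y c "k*c-r+1"] less.prems(1) False by auto
    have w: "Y - (k*c - r) \<ge> 1" using less.prems kc by linarith
    have uw: "(X-c) + (Y-(k*c-r)) \<ge> 2"
    proof (cases "X = c")
      case True then show ?thesis using False w by auto
    next
      case False
      then have "X - c \<ge> 1" using less.prems by simp
      moreover have "k*(X-c) \<ge> 1" using k \<open>X - c \<ge> 1\<close>
        using mult_mono[of 1 k 1 "X-c"] by simp
      ultimately show ?thesis using less.prems by (simp add: algebra_simps)
    qed
    have h1: "int (card (lpaths k r c (k*c-r+1) (X-1) Y)) = Q k (X-1-c) (Y-(k*c-r))"
    proof (cases "X - 1 \<ge> c")
      case True
      have "Y > k*(X-1) - r" using less.prems k by (simp add: algebra_simps)
      then show ?thesis using less.hyps[of "X-1" Y] True w by simp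
    next
      case False
      then have "X = c" using less.prems by simp
      then show ?thesis using lpaths_empty_lt[of "X-1" c] by (simp add: Q_left)
    qed
    have h2: "int (card (lpaths k r c (k*c-r+1) X (Y-1))) = Q k (X-c) (Y-1-(k*c-r))"
    proof (cases "Y - 1 > k*X - r")
      case True
      moreover have "k*c - r + 1 < X - c + Y" using True kc less.prems by linarith
      ultimately show ?thesis using less.hyps[of X "Y-1"] less.prems w by simp
    next
      case F: False
      then have Y: "Y - 1 = k*X - r" using less.prems by simp
      have u: "X - c \<ge> 1"
      proof (rule ccontr)
        assume "\<not> X - c \<ge> 1"
        then have "X = c" using less.prems by simp
        then show False using False Y by simp
      qed
      have "Y-1-(k*c-r) = k*(X-c)" using Y by (simp add: algebra_simps)
      then show ?thesis using lpaths_empty_end[where k=k and r=r and a=c and b="k*c-r+1" and m=X and n="Y-1"] F Q_line[OF u k] by simp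
    qed
    show ?thesis using rec h1 h2 Q_pascal[OF uw, of k] by (simp add: algebra_simps)
  qed
qed


definition T :: "int \<Rightarrow> int \<Rightarrow> int \<Rightarrow> int \<Rightarrow> int \<Rightarrow> int" where
  "T k r m n c = int (card (lpaths k r c (k*c-r+1) m n))"

definition g :: "int \<Rightarrow> int \<Rightarrow> int \<Rightarrow> int \<Rightarrow> int \<Rightarrow> int \<Rightarrow> nat \<Rightarrow> int" where
  "g k r m n x y i = (-1)^i * T k r m n (x + int i) * binom (y + r - 1 - k*(x + int i)) (int i)"

definition G :: "int \<Rightarrow> int \<Rightarrow> int \<Rightarrow> int \<Rightarrow> nat \<Rightarrow> int \<Rightarrow> int \<Rightarrow> int" where
  "G k r m n K x y = (\<Sum>i\<le>K. g k r m n x y i)"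

lemma binom_step: assumes "p \<ge> 0 \<or> i \<ge> 1"
  shows "binom (p+1) i = binom p i + binom p (i-1)"
proof (cases "p + 1 \<ge> 1")
  case True then show ?thesis using binom_pascal[of "p+1" i] by simp
next
  case False
  then have "i \<ge> 1" "p < 0" using assms by auto
  then show ?thesis by (simp add: binom_gt)
qed

lemma G_step: assumes "y + r - 1 - k*x \<ge> 0"
  shows "G k r m n (Suc K) x (y+1) = G k r m n (Suc K) x y - G k r m n K (x+1) y"
proof -
  have 0: "g k r m n x (y+1) 0 = g k r m n x y 0"
    using assms by (simp add: g_def binom_0)
  have S: "g k r m n x (y+1) (Suc j) = g k r m n x y (Suc j) - g k r m n (x+1) y j" for j
  proof -
    have "binom (y + 1 + r - 1 - k*(x + int (Suc j))) (int (Suc j))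
        = binom (y + r - 1 - k*(x + int (Suc j))) (int (Suc j)) + binom (y + r - 1 - k*(x + 1 + int j)) (int j)"
      using binom_step[of "y + r - 1 - k*(x + int (Suc j))" "int (Suc j)"]
      by (simp add: algebra_simps)
    then show ?thesis by (simp add: g_def algebra_simps)
  qed
  show ?thesis unfolding G_def sum.atMost_Suc_shift
    by (simp add: 0 S sum_subtractf)
qed

lemma T_big: "c > m \<Longrightarrow> T k r m n c = 0"
  by (simp add: T_def lpaths_empty_lt)

lemma G_drop: assumes "x \<ge> 0" "m \<ge> 0"
  shows "G k r m n (Suc (nat m)) x y = G k r m n (nat m) x y"
  using assms by (simp add: G_def g_def T_big)

lemma G_base: assumes "k \<ge> 1" "y = k*x - r + 1"
  shows "G k r m n K x y = T k r m n x"
proof (cases K)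
  case 0 then show ?thesis using assms by (simp add: G_def g_def binom_0)
next
  case (Suc K')
  have gz: "g k r m n x y (Suc j) = 0" for j
  proof -
    have "y + r - 1 - k*(x + int (Suc j)) < int (Suc j)"
    proof -
      have h: "0 \<le> k * int j" using assms by simp
      show ?thesis unfolding ring_distribs of_nat_Suc using h assms by linarith
    qed
    then show ?thesis by (simp add: g_def binom_gt)
  qed
  have "G k r m n K x y = g k r m n x y 0 + (\<Sum>i\<le>K'. g k r m n x y (Suc i))"
    unfolding G_def Suc by (rule sum.atMost_Suc_shift)
  also have "\<dots> = g k r m n x y 0" using gz by simp
  finally show ?thesis using assms by (simp add: g_def binom_0)
qed

lemma G_below: assumes "k \<ge> 1" "y \<le> k*x - r" "x \<ge> 0"
  shows "G k r m n K x y = 0"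
proof -
  have "g k r m n x y j = 0" for j
  proof -
    have "y + r - 1 - k*(x + int j) < 0"
    proof -
      have h: "0 \<le> k * int j" using assms by simp
      show ?thesis unfolding ring_distribs of_nat_Suc using h assms by linarith
    qed
    then show ?thesis by (simp add: g_def binom_gt)
  qed
  then show ?thesis by (simp add: G_def)
qed

lemma main_rec:
  assumes k: "k \<ge> 1" and m: "m \<ge> 0"
  shows "x \<ge> 0 \<Longrightarrow> k*x - r < y \<Longrightarrow> y \<le> n \<Longrightarrow>
    int (card (lpaths k r x y m n)) = G k r m n (Suc (nat m)) x y"
proof (induction "nat (y - (k*x - r + 1))" arbitrary: x y rule: less_induct)
  case less
  show ?case
  proof (cases "y = k*x - r + 1")
    case True
    then show ?thesis using G_base[OF k True] by (simp add: T_def)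
  next
    case False
    define y0 where "y0 = y - 1"
    have y: "y = y0 + 1" by (simp add: y0_def)
    have v0: "k*x - r < y0" using False less.prems unfolding y0_def by simp
    have fs: "card (lpaths k r x y0 m n) = card (lpaths k r (x+1) y0 m n) + card (lpaths k r x y m n)"
      using first_step[of k x r y0 m n] v0 less.prems unfolding y0_def by simp
    have ih0: "int (card (lpaths k r x y0 m n)) = G k r m n (Suc (nat m)) x y0"
      using less.hyps[of y0 x] v0 less.prems unfolding y0_def by simp
    have ih1: "int (card (lpaths k r (x+1) y0 m n)) = G k r m n (Suc (nat m)) (x+1) y0"
    proof (cases "k*(x+1) - r < y0")
      case True
      have "nat (y0 - (k*(x+1) - r + 1)) < nat (y - (k*x - r + 1))"
        using True k unfolding y0_def by (simp add: algebra_simps)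
      then show ?thesis using less.hyps[of y0 "x+1"] True less.prems unfolding y0_def by simp
    next
      case F: False
      then show ?thesis using G_below[OF k, of y0 "x+1"] less.prems
          lpaths_empty_start[where k=k and r=r and a="x+1" and b=y0 and m=m and n=n] by simp
    qed
    have st: "G k r m n (Suc (nat m)) x y = G k r m n (Suc (nat m)) x y0 - G k r m n (nat m) (x+1) y0"
      unfolding y using G_step[of y0 r k x m n "nat m"] v0 by simp
    show ?thesis using fs ih0 ih1 st G_drop[of "x+1" m k r n y0] m less.prems by simp
  qed
qed


lemma T_real:
  assumes k: "k \<ge> 1" and c: "c \<ge> 0" and n: "n > k*m - r"
  shows "real_of_int (T k r m n c) = real_of_int (n + r - k * m) / real_of_int (m + n + r - (k + 1) * c)
     * real_of_int (binom (m + n + r - (k + 1) * c) (m - c))"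
proof (cases "c \<le> m")
  case True
  have kc: "k*c \<le> k*m" using True k by (simp add: mult_left_mono)
  have "T k r m n c = Q k (m-c) (n-(k*c-r))"
    unfolding T_def using ballot[OF k, of m r n c] n True by simp
  moreover have "real_of_int (Q k (m-c) (n-(k*c-r))) = real_of_int (n-(k*c-r) - k*(m-c)) / real_of_int ((m-c) + (n-(k*c-r)))
      * real_of_int (binom ((m-c) + (n-(k*c-r))) (m-c))"
    by (rule Q_real) (use True n kc in auto)
  moreover have "n-(k*c-r) - k*(m-c) = n + r - k*m" "(m-c) + (n-(k*c-r)) = m + n + r - (k + 1) * c"
    by (simp_all add: algebra_simps)
  ultimately show ?thesis by simp
next
  case False
  then show ?thesis by (simp add: T_big)
qed

theorem corollary2p1:
  fixes k r a b m n :: int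
  assumes "k \<ge> 1" and "0 \<le> a" and "a \<le> m"
    and "max 0 (k * a - r) < b" and "b \<le> n" and "n > k * m - r"
  shows "real (card (lpaths k r a b m n)) =
    (\<Sum>i \<in> {0..\<lfloor>real_of_int (b + r - 1 - k * a) / real_of_int (k + 1)\<rfloor>}.
        (-1) ^ nat i
        * (real_of_int (n + r - k * m) / real_of_int (m + n + r - (k + 1) * (a + i)))
        * real_of_int (binom (m + n + r - (k + 1) * (a + i)) (m - a - i))
        * real_of_int (binom (b + r - 1 - k * (a + i)) i))"
proof -
  have k: "k \<ge> 1" and m: "m \<ge> 0" and ab: "k*a - r < b" using assms by auto
  define X where "X = b + r - 1 - k * a"
  define q where "q = X div (k+1)"
  have X0: "X \<ge> 0" using ab by (simp add: X_def)
  have q0: "q \<ge> 0" using X0 k unfolding q_def by (simp add: pos_imp_zdiv_nonneg_iff)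
  have fl: "\<lfloor>real_of_int (b + r - 1 - k * a) / real_of_int (k + 1)\<rfloor> = q"
    unfolding q_def X_def by (rule floor_divide_of_int_eq)
  define trm where "trm i = (-1) ^ nat i
        * (real_of_int (n + r - k * m) / real_of_int (m + n + r - (k + 1) * (a + i)))
        * real_of_int (binom (m + n + r - (k + 1) * (a + i)) (m - a - i))
        * real_of_int (binom (b + r - 1 - k * (a + i)) i)" for i
  define h where "h j = real_of_int (g k r m n a b j)" for j
  have th: "trm (int j) = h j" for j
  proof -
    have "a + int j \<ge> 0" using assms by simp
    from T_real[OF k this assms(6)] show ?thesis
      unfolding trm_def h_def g_def diff_diff_eq by simp
  qed
  have "{0..q} = int ` {..nat q}" using q0
    by (auto simp: image_iff intro!: bexI[where x="nat x" for x])
  then have s1: "(\<Sum>i\<in>{0..q}. trm i) = (\<Sum>j\<le>nat q. h j)"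
    by (simp add: sum.reindex th)
  define M where "M = max (nat q) (Suc (nat m))"
  have s2: "(\<Sum>j\<le>nat q. h j) = (\<Sum>j\<le>M. h j)"
  proof (rule sum.mono_neutral_left)
    show "\<forall>j\<in>{..M} - {..nat q}. h j = 0"
    proof
      fix j assume "j \<in> {..M} - {..nat q}"
      then have jq: "int j \<ge> q + 1" by auto
      have "X < (k+1) * (q+1)"
      proof -
        have "X = (k+1) * q + X mod (k+1)" unfolding q_def by simp
        moreover have "X mod (k+1) < k+1" using k by (intro pos_mod_bound) simp
        ultimately show ?thesis by (simp add: algebra_simps)
      qed
      also have "\<dots> \<le> (k+1) * int j" using jq k by (simp add: mult_left_mono)
      finally have "b + r - 1 - k * (a + int j) < int j" unfolding X_def by (simp add: algebra_simps)
      then show "h j = 0" by (simp add: h_def g_def binom_gt)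
    qed
  qed (auto simp: M_def)
  have s3: "(\<Sum>j\<le>Suc (nat m). h j) = (\<Sum>j\<le>M. h j)"
  proof (rule sum.mono_neutral_left)
    show "\<forall>j\<in>{..M} - {..Suc (nat m)}. h j = 0"
    proof
      fix j assume "j \<in> {..M} - {..Suc (nat m)}"
      then have "a + int j > m" using assms by auto
      then show "h j = 0" by (simp add: h_def g_def T_big)
    qed
  qed (auto simp: M_def)
  have hN: "int (card (lpaths k r a b m n)) = G k r m n (Suc (nat m)) a b"
    using main_rec[OF k m, of a r b n] assms ab by simp
  have "real (card (lpaths k r a b m n)) = (\<Sum>j\<le>Suc (nat m). h j)"
  proof -
    have "real (card (lpaths k r a b m n)) = real_of_int (int (card (lpaths k r a b m n)))" by simp
    also have "\<dots> = (\<Sum>j\<le>Suc (nat m). h j)" unfolding hN G_def h_def by simp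
    finally show ?thesis .
  qed
  then show ?thesis unfolding fl using s1 s2 s3 by (simp add: trm_def)
qed

end
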